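(* Let $X\in[0,1]^{N\times N}$ satisfy $\|D^TX\|_0+\|XD\|_0\leq s$ for some $s<2N^2$. Let $Q_{2D}(X)$ be the two-dimensional first-order $\Sigma\Delta$ quantization of $X$ with an alphabet of step size $\delta$, whose state matrix $u$ satisfies $X-Q_{2D}(X)=DuD^T$ and $\|u\|_{\max}\leq\delta/2$. Let $\hat X$ be a solution to $$\min_{Z\in\mathbb{R}^{N\times N}}\|D^TZ\|_1+\|ZD\|_1\quad\text{subject to}\quad\|D^{-1}(Z-Q_{2D}(X))(D^{-1})^T\|_{\max}\leq\delta/2.$$ Then $\|\hat X-X\|_F\leq C\sqrt{s}\,\delta$ for some absolute constant $C$.
   Context: $D$ is the $N\times N$ matrix with $1$ on the diagonal, $-1$ on the subdiagonal, $0$ elsewhere. For matrices, $\|\cdot\|_1$ is the entrywise $\ell_1$ norm, $\|\cdot\|_0$ the number of nonzero entries, $\|\cdot\|_{\max}$ the largest absolute entry. The two-dimensional first-order $\Sigma\Delta$ quantization with a finite alphabet $\mathcal{A}$ (step size $\delta$): with $u_{i,0}=u_{0,j}=0$, for $i,j\geq1$ set $q_{i,j}=Q_{\mathcal{A}}(u_{i,j-1}+u_{i-1,j}-u_{i-1,j-1}+X_{i,j})$ and $u_{i,j}=u_{i,j-1}+u_{i-1,j}-u_{i-1,j-1}+X_{i,j}-q_{i,j}$, where $Q_{\mathcal{A}}(z)$ is a nearest element of $\mathcal{A}$ to $z$; then $Q_{2D}(X)=q$ and $X-q=DuD^T$. The alphabet is assumed such that the scheme is stable with $\|u\|_{\max}\leq\delta/2$.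 *)

theory Defs
  imports "Jordan_Normal_Form.Matrix"
begin

definition Dmat :: "nat \<Rightarrow> real mat" where
  "Dmat N = mat N N (\<lambda>(i,j). if i = j then 1 else if i = j + 1 then -1 else 0)"

definition Dinv :: "nat \<Rightarrow> real mat" where
  "Dinv N = (SOME B. B \<in> carrier_mat N N \<and> Dmat N * B = 1\<^sub>m N \<and> B * Dmat N = 1\<^sub>m N)"

definition l1_norm :: "real mat \<Rightarrow> real" where
  "l1_norm A = (\<Sum>i<dim_row A. \<Sum>j<dim_col A. \<bar>A $$ (i,j)\<bar>)"

definition l0_norm :: "real mat \<Rightarrow> nat" where
  "l0_norm A = card {(i,j). i < dim_row A \<and> j < dim_col A \<and> A $$ (i,j) \<noteq> 0}"

definition max_norm :: "real mat \<Rightarrow> real" where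
  "max_norm A = Max (insert 0 {\<bar>A $$ (i,j)\<bar> | i j. i < dim_row A \<and> j < dim_col A})"

definition frob_norm :: "real mat \<Rightarrow> real" where
  "frob_norm A = sqrt (\<Sum>i<dim_row A. \<Sum>j<dim_col A. (A $$ (i,j))^2)"

text \<open>Extension of the state matrix by zeros: ext u i j = u_{i,j} in the paper's
  1-based indexing, with u_{i,0} = u_{0,j} = 0.\<close>
definition ext :: "real mat \<Rightarrow> nat \<Rightarrow> nat \<Rightarrow> real" where
  "ext u i j = (if i = 0 \<or> j = 0 then 0 else u $$ (i - 1, j - 1))"

definition sigma_delta_2D :: "nat \<Rightarrow> real set \<Rightarrow> real mat \<Rightarrow> real mat \<Rightarrow> real mat \<Rightarrow> bool" where
  "sigma_delta_2D N A X q u \<longleftrightarrow>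
     X \<in> carrier_mat N N \<and> q \<in> carrier_mat N N \<and> u \<in> carrier_mat N N \<and>
     (\<forall>i<N. \<forall>j<N.
        (let w = ext u (i+1) j + ext u i (j+1) - ext u i j + X $$ (i,j) in
          q $$ (i,j) \<in> A \<and> (\<forall>a\<in>A. \<bar>w - q $$ (i,j)\<bar> \<le> \<bar>w - a\<bar>) \<and>
          u $$ (i,j) = w - q $$ (i,j)))"

definition step_alphabet :: "real set \<Rightarrow> real \<Rightarrow> bool" where
  "step_alphabet A \<delta> \<longleftrightarrow> \<delta> > 0 \<and> (\<exists>a0 K. A = {a0 + real k * \<delta> | k. k \<le> K})"

definition feasible :: "nat \<Rightarrow> real \<Rightarrow> real mat \<Rightarrow> real mat \<Rightarrow> bool" where
  "feasible N \<delta> q Z \<longleftrightarrow> Z \<in> carrier_mat N N \<and>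
     max_norm (Dinv N * (Z - q) * transpose_mat (Dinv N)) \<le> \<delta> / 2"

definition objective :: "nat \<Rightarrow> real mat \<Rightarrow> real" where
  "objective N Z = l1_norm (transpose_mat (Dmat N) * Z) + l1_norm (Z * Dmat N)"

end

theory Submission
  imports Defs "Jordan_Normal_Form.Determinant" "HOL-Analysis.Convex"
begin


lemma Dmat_carrier: "Dmat N \<in> carrier_mat N N" by (simp add: Dmat_def)

lemma Dmat_idx: "i < N \<Longrightarrow> j < N \<Longrightarrow> Dmat N $$ (i,j) = (if i = j then 1 else if i = j + 1 then -1 else 0)"
  by (simp add: Dmat_def)

lemma Dinv_props: "Dinv N \<in> carrier_mat N N \<and> Dmat N * Dinv N = 1\<^sub>m N \<and> Dinv N * Dmat N = 1\<^sub>m N"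
proof -
  have "det (Dmat N) = prod_list (diag_mat (Dmat N))"
    by (rule det_lower_triangular[where n=N]) (auto simp: Dmat_def)
  also have "\<dots> = 1" proof - have "diag_mat (Dmat N) = map (\<lambda>_. 1) [0..<N]" by (auto simp: diag_mat_def Dmat_def) then show ?thesis by (simp add: map_replicate_const) qed
  finally have "det (Dmat N) \<noteq> 0" by simp
  from det_non_zero_imp_unit[OF Dmat_carrier this, of undefined]
  have "\<exists>B. B \<in> carrier_mat N N \<and> Dmat N * B = 1\<^sub>m N \<and> B * Dmat N = 1\<^sub>m N"
    by (auto simp: Units_def ring_mat_def)
  then show ?thesis unfolding Dinv_def by (rule someI_ex)
qed



definition innerm :: "real mat \<Rightarrow> real mat \<Rightarrow> real" where
  "innerm A B = (\<Sum>i<dim_row A. \<Sum>j<dim_col A. A $$ (i,j) * B $$ (i,j))"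

definition sqn :: "real mat \<Rightarrow> real" where
  "sqn A = (\<Sum>i<dim_row A. \<Sum>j<dim_col A. (A $$ (i,j))^2)"

lemma swap_in: "(\<Sum>i\<in>A. \<Sum>j\<in>B. \<Sum>k\<in>C. f i j k) = (\<Sum>i\<in>A. \<Sum>k\<in>C. \<Sum>j\<in>B. f i j k)"
  by (rule sum.cong[OF refl], rule sum.swap)

lemma mult_entry: "A \<in> carrier_mat n p \<Longrightarrow> B \<in> carrier_mat p m \<Longrightarrow> i < n \<Longrightarrow> j < m \<Longrightarrow>
  (A * B) $$ (i,j) = (\<Sum>k<p. A $$ (i,k) * B $$ (k,j))"
  by (auto simp: scalar_prod_def atLeast0LessThan)

lemma row_col: "A \<in> carrier_mat n p \<Longrightarrow> B \<in> carrier_mat p m \<Longrightarrow> i < n \<Longrightarrow> j < m \<Longrightarrow>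
  row A i \<bullet> col B j = (\<Sum>k<p. A $$ (i,k) * B $$ (k,j))"
  by (auto simp: scalar_prod_def atLeast0LessThan)

lemma col_col: "A \<in> carrier_mat n p \<Longrightarrow> B \<in> carrier_mat n m \<Longrightarrow> i < p \<Longrightarrow> j < m \<Longrightarrow>
  col A i \<bullet> col B j = (\<Sum>k<n. A $$ (k,i) * B $$ (k,j))"
  by (auto simp: scalar_prod_def atLeast0LessThan)

lemma row_row: "A \<in> carrier_mat n m \<Longrightarrow> B \<in> carrier_mat p m \<Longrightarrow> i < n \<Longrightarrow> j < p \<Longrightarrow>
  row A i \<bullet> row B j = (\<Sum>k<m. A $$ (i,k) * B $$ (j,k))"
  by (auto simp: scalar_prod_def atLeast0LessThan)

lemma innerm_L1:
  assumes A: "A \<in> carrier_mat n m" and B: "B \<in> carrier_mat n p" and C: "C \<in> carrier_mat p m"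
  shows "innerm A (B * C) = innerm (transpose_mat B * A) C"
proof -
  have "innerm A (B * C) = (\<Sum>i<n. \<Sum>j<m. \<Sum>k<p. A $$ (i,j) * B $$ (i,k) * C $$ (k,j))"
    using A B C by (simp add: innerm_def row_col[OF B C] sum_distrib_left mult.assoc)
  also have "\<dots> = (\<Sum>i<n. \<Sum>k<p. \<Sum>j<m. A $$ (i,j) * B $$ (i,k) * C $$ (k,j))"
    by (rule swap_in)
  also have "\<dots> = (\<Sum>k<p. \<Sum>i<n. \<Sum>j<m. A $$ (i,j) * B $$ (i,k) * C $$ (k,j))"
    by (rule sum.swap)
  also have "\<dots> = (\<Sum>k<p. \<Sum>j<m. \<Sum>i<n. A $$ (i,j) * B $$ (i,k) * C $$ (k,j))"
    by (rule swap_in)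
  also have "\<dots> = innerm (transpose_mat B * A) C"
    using A B C by (simp add: innerm_def col_col[OF B A] sum_distrib_left mult_ac)
  finally show ?thesis .
qed

lemma innerm_L2:
  assumes A: "A \<in> carrier_mat n m" and B: "B \<in> carrier_mat n p" and C: "C \<in> carrier_mat p m"
  shows "innerm A (B * C) = innerm (A * transpose_mat C) B"
proof -
  have "innerm A (B * C) = (\<Sum>i<n. \<Sum>j<m. \<Sum>k<p. A $$ (i,j) * B $$ (i,k) * C $$ (k,j))"
    using A B C by (simp add: innerm_def row_col[OF B C] sum_distrib_left mult.assoc)
  also have "\<dots> = (\<Sum>i<n. \<Sum>k<p. \<Sum>j<m. A $$ (i,j) * B $$ (i,k) * C $$ (k,j))"
    by (rule swap_in)
  also have "\<dots> = innerm (A * transpose_mat C) B"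
    using A B C by (simp add: innerm_def row_row[OF A C] sum_distrib_left mult_ac)
  finally show ?thesis .
qed

lemma innerm_L3:
  assumes "\<And>i j. i < dim_row A \<Longrightarrow> j < dim_col A \<Longrightarrow> \<bar>E $$ (i,j)\<bar> \<le> m"
  shows "innerm A E \<le> m * l1_norm A"
proof -
  have "innerm A E \<le> (\<Sum>i<dim_row A. \<Sum>j<dim_col A. \<bar>A $$ (i,j)\<bar> * m)"
    unfolding innerm_def
  proof (intro sum_mono)
    fix i j assume "i \<in> {..<dim_row A}" "j \<in> {..<dim_col A}"
    then have "\<bar>E $$ (i,j)\<bar> \<le> m" using assms by auto
    then have "\<bar>A $$ (i,j)\<bar> * \<bar>E $$ (i,j)\<bar> \<le> \<bar>A $$ (i,j)\<bar> * m" by (simp add: mult_left_mono)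
    then show "A $$ (i,j) * E $$ (i,j) \<le> \<bar>A $$ (i,j)\<bar> * m"
      by (metis abs_ge_self abs_mult order_trans)
  qed
  also have "\<dots> = m * l1_norm A" by (simp add: l1_norm_def sum_distrib_left mult_ac)
  finally show ?thesis .
qed

lemma l1_L4:
  assumes M: "M \<in> carrier_mat n p" and B: "B \<in> carrier_mat p m"
    and rs: "\<And>k. k < p \<Longrightarrow> (\<Sum>j<m. \<bar>B $$ (k,j)\<bar>) \<le> c"
  shows "l1_norm (M * B) \<le> c * l1_norm M"
proof -
  have "l1_norm (M * B) = (\<Sum>i<n. \<Sum>j<m. \<bar>\<Sum>k<p. M $$ (i,k) * B $$ (k,j)\<bar>)"
    using M B by (simp add: l1_norm_def row_col[OF M B])
  also have "\<dots> \<le> (\<Sum>i<n. \<Sum>j<m. \<Sum>k<p. \<bar>M $$ (i,k)\<bar> * \<bar>B $$ (k,j)\<bar>)"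
    by (intro sum_mono order_trans[OF sum_abs]) (simp add: abs_mult)
  also have "\<dots> = (\<Sum>i<n. \<Sum>k<p. \<bar>M $$ (i,k)\<bar> * (\<Sum>j<m. \<bar>B $$ (k,j)\<bar>))"
    by (subst swap_in) (simp add: sum_distrib_left)
  also have "\<dots> \<le> (\<Sum>i<n. \<Sum>k<p. \<bar>M $$ (i,k)\<bar> * c)"
    by (intro sum_mono mult_left_mono rs) auto
  also have "\<dots> = c * l1_norm M" using M by (simp add: l1_norm_def sum_distrib_left mult_ac)
  finally show ?thesis .
qed

lemma wcs: fixes b w :: "'a \<Rightarrow> real"
  shows "(\<Sum>k\<in>K. b k * w k)^2 \<le> (\<Sum>k\<in>K. \<bar>b k\<bar>) * (\<Sum>k\<in>K. \<bar>b k\<bar> * (w k)^2)"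
proof -
  have h: "\<bar>\<Sum>k\<in>K. b k * w k\<bar> \<le> (\<Sum>k\<in>K. sqrt \<bar>b k\<bar> * (sqrt \<bar>b k\<bar> * \<bar>w k\<bar>))"
    by (intro order_trans[OF sum_abs] sum_mono) (simp add: abs_mult real_sqrt_mult_self flip: mult.assoc)
  have "(\<Sum>k\<in>K. b k * w k)^2 \<le> (\<Sum>k\<in>K. sqrt \<bar>b k\<bar> * (sqrt \<bar>b k\<bar> * \<bar>w k\<bar>))^2"
    using power_mono[OF h abs_ge_zero, of 2] by simp
  also have "\<dots> \<le> (\<Sum>k\<in>K. (sqrt \<bar>b k\<bar>)^2) * (\<Sum>k\<in>K. (sqrt \<bar>b k\<bar> * \<bar>w k\<bar>)^2)"
    by (rule Cauchy_Schwarz_ineq_sum)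
  also have "\<dots> = (\<Sum>k\<in>K. \<bar>b k\<bar>) * (\<Sum>k\<in>K. \<bar>b k\<bar> * (w k)^2)"
    by (simp add: power_mult_distrib)
  finally show ?thesis .
qed

lemma sq_L5:
  assumes B: "B \<in> carrier_mat n p" and W: "W \<in> carrier_mat p m"
    and rs: "\<And>i. i < n \<Longrightarrow> (\<Sum>k<p. \<bar>B $$ (i,k)\<bar>) \<le> r"
    and cs: "\<And>k. k < p \<Longrightarrow> (\<Sum>i<n. \<bar>B $$ (i,k)\<bar>) \<le> c"
    and r0: "r \<ge> 0"
  shows "sqn (B * W) \<le> r * c * sqn W"
proof -
  have "sqn (B * W) = (\<Sum>i<n. \<Sum>j<m. (\<Sum>k<p. B $$ (i,k) * W $$ (k,j))^2)"
    using B W by (simp add: sqn_def row_col[OF B W])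
  also have "\<dots> \<le> (\<Sum>i<n. \<Sum>j<m. r * (\<Sum>k<p. \<bar>B $$ (i,k)\<bar> * (W $$ (k,j))^2))"
  proof (intro sum_mono)
    fix i j assume i: "i \<in> {..<n}"
    have "(\<Sum>k<p. B $$ (i,k) * W $$ (k,j))^2 \<le> (\<Sum>k<p. \<bar>B $$ (i,k)\<bar>) * (\<Sum>k<p. \<bar>B $$ (i,k)\<bar> * (W $$ (k,j))^2)"
      by (rule wcs)
    also have "\<dots> \<le> r * (\<Sum>k<p. \<bar>B $$ (i,k)\<bar> * (W $$ (k,j))^2)"
      using rs i by (intro mult_right_mono sum_nonneg) auto
    finally show "(\<Sum>k<p. B $$ (i,k) * W $$ (k,j))^2 \<le> r * (\<Sum>k<p. \<bar>B $$ (i,k)\<bar> * (W $$ (k,j))^2)" .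
  qed
  also have "\<dots> = r * (\<Sum>i<n. \<Sum>j<m. \<Sum>k<p. \<bar>B $$ (i,k)\<bar> * (W $$ (k,j))^2)"
    by (simp add: sum_distrib_left)
  also have "\<dots> = r * (\<Sum>j<m. \<Sum>i<n. \<Sum>k<p. \<bar>B $$ (i,k)\<bar> * (W $$ (k,j))^2)"
    by (subst sum.swap) (rule refl)
  also have "\<dots> = r * (\<Sum>j<m. \<Sum>k<p. \<Sum>i<n. \<bar>B $$ (i,k)\<bar> * (W $$ (k,j))^2)"
    by (subst swap_in) (rule refl)
  also have "\<dots> = r * (\<Sum>j<m. \<Sum>k<p. (\<Sum>i<n. \<bar>B $$ (i,k)\<bar>) * (W $$ (k,j))^2)"
    by (simp add: sum_distrib_right)
  also have "\<dots> \<le> r * (\<Sum>j<m. \<Sum>k<p. c * (W $$ (k,j))^2)"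
    using cs r0 by (intro mult_left_mono sum_mono mult_right_mono) auto
  also have "\<dots> = r * c * sqn W"
    using W by (simp add: sqn_def sum_distrib_left mult_ac) (rule sum.swap)
  finally show ?thesis .
qed



lemma D_rows: "k < N \<Longrightarrow> (\<Sum>j<N. \<bar>Dmat N $$ (k,j)\<bar>) \<le> 2"
proof -
  assume k: "k < N"
  have "(\<Sum>j<N. \<bar>Dmat N $$ (k,j)\<bar>) \<le> (\<Sum>j<N. (if j = k then 1 else 0) + (if j = k - 1 then 1 else 0))"
    by (intro sum_mono) (auto simp: Dmat_idx k)
  also have "\<dots> \<le> 2" by (simp add: sum.distrib)
  finally show ?thesis .
qed

lemma D_cols: "j < N \<Longrightarrow> (\<Sum>k<N. \<bar>Dmat N $$ (k,j)\<bar>) \<le> 2"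
proof -
  assume j: "j < N"
  have "(\<Sum>k<N. \<bar>Dmat N $$ (k,j)\<bar>) \<le> (\<Sum>k<N. (if k = j then 1 else 0) + (if k = j + 1 then 1 else 0))"
    by (intro sum_mono) (auto simp: Dmat_idx j)
  also have "\<dots> \<le> 2" by (simp add: sum.distrib)
  finally show ?thesis .
qed

lemma max_norm_entry: "i < dim_row A \<Longrightarrow> j < dim_col A \<Longrightarrow> \<bar>A $$ (i,j)\<bar> \<le> max_norm A"
  unfolding max_norm_def
  by (rule Max_ge) (auto intro: finite_image_set2)

lemma cone_entry: "\<bar>g::real\<bar> \<le> \<bar>a + g\<bar> - \<bar>a\<bar> + 2 * (if a \<noteq> 0 then \<bar>g\<bar> else 0)"
  by (cases "a = 0") auto

lemma cone:
  assumes a: "a \<in> carrier_mat n m" and g: "g \<in> carrier_mat n m"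
  shows "l1_norm g \<le> l1_norm (a + g) - l1_norm a + 2 * (\<Sum>i<n. \<Sum>j<m. if a $$ (i,j) \<noteq> 0 then \<bar>g $$ (i,j)\<bar> else 0)"
proof -
  have "l1_norm g \<le> (\<Sum>i<n. \<Sum>j<m. \<bar>a $$ (i,j) + g $$ (i,j)\<bar> - \<bar>a $$ (i,j)\<bar> + 2 * (if a $$ (i,j) \<noteq> 0 then \<bar>g $$ (i,j)\<bar> else 0))"
    using g unfolding l1_norm_def carrier_mat_def by (simp only: mem_Collect_eq, intro sum_mono, elim conjE, simp only: cone_entry)
  also have "\<dots> = l1_norm (a + g) - l1_norm a + 2 * (\<Sum>i<n. \<Sum>j<m. if a $$ (i,j) \<noteq> 0 then \<bar>g $$ (i,j)\<bar> else 0)"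
    using a g by (simp add: l1_norm_def sum_subtractf sum.distrib sum_distrib_left)
  finally show ?thesis .
qed

lemma supp_cs:
  assumes a: "a \<in> carrier_mat n m" and g: "g \<in> carrier_mat n m"
  shows "(\<Sum>i<n. \<Sum>j<m. if a $$ (i,j) \<noteq> 0 then \<bar>g $$ (i,j)\<bar> else 0) \<le> sqrt (real (l0_norm a)) * sqrt (sqn g)"
proof -
  let ?P = "{..<n} \<times> {..<m}"
  let ?ind = "\<lambda>x. if a $$ x \<noteq> 0 then 1 else (0::real)"
  have e1: "(\<Sum>i<n. \<Sum>j<m. if a $$ (i,j) \<noteq> 0 then \<bar>g $$ (i,j)\<bar> else 0) = (\<Sum>x\<in>?P. ?ind x * \<bar>g $$ x\<bar>)"
    by (simp add: sum.cartesian_product case_prod_beta) (intro sum.cong, auto)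
  have e2: "(\<Sum>x\<in>?P. (?ind x)^2) = real (l0_norm a)"
  proof -
    have "(\<Sum>x\<in>?P. (?ind x)^2) = (\<Sum>x\<in>?P. if a $$ x \<noteq> 0 then 1 else 0)"
      by (intro sum.cong) auto
    also have "\<dots> = (\<Sum>x\<in>{x\<in>?P. a $$ x \<noteq> 0}. 1)"
      by (rule sum.inter_filter[symmetric]) auto
    also have "{x\<in>?P. a $$ x \<noteq> 0} = {(i,j). i < dim_row a \<and> j < dim_col a \<and> a $$ (i,j) \<noteq> 0}"
      using a by auto
    finally show ?thesis by (simp add: l0_norm_def)
  qed
  have e3: "(\<Sum>x\<in>?P. \<bar>g $$ x\<bar>^2) = sqn g"
    using g by (simp add: sqn_def sum.cartesian_product case_prod_beta)
  have "(\<Sum>x\<in>?P. ?ind x * \<bar>g $$ x\<bar>)^2 \<le> (\<Sum>x\<in>?P. (?ind x)^2) * (\<Sum>x\<in>?P. \<bar>g $$ x\<bar>^2)"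
    by (rule Cauchy_Schwarz_ineq_sum)
  then have "(\<Sum>x\<in>?P. ?ind x * \<bar>g $$ x\<bar>)^2 \<le> real (l0_norm a) * sqn g" using e2 e3 by simp
  then have "sqrt ((\<Sum>x\<in>?P. ?ind x * \<bar>g $$ x\<bar>)^2) \<le> sqrt (real (l0_norm a) * sqn g)"
    using real_sqrt_le_mono by blast
  moreover have "(\<Sum>x\<in>?P. ?ind x * \<bar>g $$ x\<bar>) \<ge> 0" by (intro sum_nonneg) auto
  ultimately show ?thesis using e1 by (simp add: real_sqrt_mult)
qed



declare minus_carrier_mat[simp]

lemma main:
  fixes N :: nat and A :: "real set" and X q u Xh :: "real mat" and \<delta> s :: real
  assumes X: "X \<in> carrier_mat N N"
    and s1: "real (l0_norm (transpose_mat (Dmat N) * X) + l0_norm (X * Dmat N)) \<le> s"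
    and alph: "step_alphabet A \<delta>" and sd: "sigma_delta_2D N A X q u"
    and Xq: "X - q = Dmat N * u * transpose_mat (Dmat N)" and um: "max_norm u \<le> \<delta> / 2"
    and fe: "feasible N \<delta> q Xh" and opt: "\<forall>Z. feasible N \<delta> q Z \<longrightarrow> objective N Xh \<le> objective N Z"
  shows "frob_norm (Xh - X) \<le> 16 * sqrt s * \<delta>"
proof -
  define D where "D = Dmat N"
  define Di where "Di = Dinv N"
  have D: "D \<in> carrier_mat N N" unfolding D_def by (rule Dmat_carrier)
  have Di: "Di \<in> carrier_mat N N" and DDi: "D * Di = 1\<^sub>m N" and DiD: "Di * D = 1\<^sub>m N"
    using Dinv_props[of N] unfolding D_def Di_def by auto
  have DT: "transpose_mat D \<in> carrier_mat N N" and DiT: "transpose_mat Di \<in> carrier_mat N N"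
    using D Di by auto
  have q: "q \<in> carrier_mat N N" and u: "u \<in> carrier_mat N N"
    using sd unfolding sigma_delta_2D_def by auto
  have Xh: "Xh \<in> carrier_mat N N" using fe unfolding feasible_def by auto
  have d0: "\<delta> > 0" using alph unfolding step_alphabet_def by auto
  have T1: "transpose_mat D * transpose_mat Di = 1\<^sub>m N"
    using transpose_mult[OF Di D] DiD by simp
  have T2: "transpose_mat Di * transpose_mat D = 1\<^sub>m N"
    using transpose_mult[OF D Di] DDi by simp
  have "Di * (X - q) * transpose_mat Di = Di * (D * u * transpose_mat D) * transpose_mat Di"
    using Xq unfolding D_def by simp
  also have "\<dots> = (Di * D) * u * (transpose_mat D * transpose_mat Di)"
    using D Di u DT DiT by (simp add: assoc_mult_mat[of _ N N _ N _ N])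
  also have "\<dots> = u" using DiD T1 u by simp
  finally have Xf: "Di * (X - q) * transpose_mat Di = u" .
  have "feasible N \<delta> q X" using X Xf um unfolding feasible_def Di_def by simp
  with opt have objle: "objective N Xh \<le> objective N X" by blast
  define v where "v = Di * (Xh - q) * transpose_mat Di"
  have v: "v \<in> carrier_mat N N" unfolding v_def using Di Xh q by auto
  have vm: "max_norm v \<le> \<delta> / 2" using fe unfolding feasible_def v_def Di_def by simp
  have Xhq: "Xh - q \<in> carrier_mat N N" using Xh q by simp
  have "D * v * transpose_mat D = (D * Di) * (Xh - q) * (transpose_mat Di * transpose_mat D)"
    unfolding v_def using D Di Xhq DT DiT by (simp add: assoc_mult_mat[of _ N N _ N _ N])
  also have "\<dots> = Xh - q" using DDi T2 Xhq by (simp add: left_mult_one_mat[OF Xhq] right_mult_one_mat[OF Xhq])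
  finally have vrep: "Xh - q = D * v * transpose_mat D" by simp
  define E where "E = v - u"
  define W where "W = Xh - X"
  have E: "E \<in> carrier_mat N N" unfolding E_def using v u by simp
  have W: "W \<in> carrier_mat N N" unfolding W_def using Xh X by simp
  have Wrep: "W = D * (E * transpose_mat D)"
  proof -
    have "D * (E * transpose_mat D) = D * v * transpose_mat D - D * u * transpose_mat D"
      unfolding E_def using D v u DT
      by (simp add: minus_mult_distrib_mat[OF v u DT] mult_minus_distrib_mat[OF D mult_carrier_mat[OF v DT] mult_carrier_mat[OF u DT]])
    also have "\<dots> = (Xh - q) - (X - q)" using vrep Xq unfolding D_def by simp
    also have "\<dots> = W" unfolding W_def using Xh X q by (intro eq_matI) auto
    finally show ?thesis by simp
  qed
  have Eb: "\<bar>E $$ (i,j)\<bar> \<le> \<delta>" if "i < N" "j < N" for i j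
  proof -
    have "\<bar>v $$ (i,j)\<bar> \<le> \<delta>/2" using max_norm_entry[of i v j] v vm that by auto
    moreover have "\<bar>u $$ (i,j)\<bar> \<le> \<delta>/2" using max_norm_entry[of i u j] u um that by auto
    ultimately show ?thesis unfolding E_def using that v u by auto
  qed
  define g where "g = transpose_mat D * W"
  define h where "h = W * D"
  have g: "g \<in> carrier_mat N N" unfolding g_def using DT W by simp
  have h: "h \<in> carrier_mat N N" unfolding h_def using D W by simp
  define F where "F = sqrt (sqn W)"
  have F: "frob_norm (Xh - X) = F" unfolding F_def frob_norm_def sqn_def W_def by simp
  have F0: "F \<ge> 0" unfolding F_def by (simp add: sqn_def sum_nonneg)
  have "sqn W = innerm W W" unfolding sqn_def innerm_def by (simp add: power2_eq_square)
  also have "\<dots> = innerm W (D * (E * transpose_mat D))" using Wrep by simp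
  also have "\<dots> = innerm g (E * transpose_mat D)"
    unfolding g_def using W D E DT by (intro innerm_L1) auto
  also have "\<dots> = innerm (g * D) E"
    using innerm_L2[OF g E DT] by simp
  also have "\<dots> \<le> \<delta> * l1_norm (g * D)"
    by (rule innerm_L3) (use Eb g D in auto)
  also have "\<dots> \<le> \<delta> * (2 * l1_norm g)"
    using d0 l1_L4[OF g D, of 2] D_rows[of _ N] unfolding D_def by (intro mult_left_mono) auto
  finally have en0: "sqn W \<le> \<delta> * (2 * l1_norm g)" .
  have sW0: "sqn W \<ge> 0" unfolding sqn_def by (intro sum_nonneg) auto
  have en: "F^2 \<le> 2 * \<delta> * l1_norm g" unfolding F_def using en0 sW0 by simp
  have sg: "sqn g \<le> 2 * 2 * sqn W"
    unfolding g_def using DT W D_rows[of _ N] D_cols[of _ N] unfolding D_def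
    by (intro sq_L5[of _ N N]) auto
  have sh: "sqn h \<le> 2 * 2 * sqn W"
  proof -
    have "sqn h = sqn (transpose_mat h)" unfolding sqn_def using h
      by simp (rule sum.swap)
    also have "transpose_mat h = transpose_mat D * transpose_mat W" unfolding h_def
      using transpose_mult[OF W D] by simp
    also have "sqn \<dots> \<le> 2 * 2 * sqn (transpose_mat W)"
      using DT W D_rows[of _ N] D_cols[of _ N] unfolding D_def
      by (intro sq_L5[of _ N N]) auto
    also have "sqn (transpose_mat W) = sqn W" unfolding sqn_def using W
      by simp (rule sum.swap)
    finally show ?thesis by simp
  qed
  have sgF: "sqrt (sqn g) \<le> 2 * F"
  proof -
    have "sqrt (sqn g) \<le> sqrt (2^2 * sqn W)" using sg by (intro real_sqrt_le_mono) simp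
    then show ?thesis unfolding F_def by (simp add: real_sqrt_mult)
  qed
  have shF: "sqrt (sqn h) \<le> 2 * F"
  proof -
    have "sqrt (sqn h) \<le> sqrt (2^2 * sqn W)" using sh by (intro real_sqrt_le_mono) simp
    then show ?thesis unfolding F_def by (simp add: real_sqrt_mult)
  qed
  define a where "a = transpose_mat D * X"
  define b where "b = X * D"
  have a: "a \<in> carrier_mat N N" unfolding a_def using DT X by simp
  have b: "b \<in> carrier_mat N N" unfolding b_def using D X by simp
  have XhW: "Xh = X + W" unfolding W_def using X Xh by (intro eq_matI) auto
  have ag: "transpose_mat D * Xh = a + g" unfolding XhW a_def g_def
    using DT X W by (simp add: mult_add_distrib_mat[of _ N N])
  have bh: "Xh * D = b + h" unfolding XhW b_def h_def
    using D X W by (simp add: add_mult_distrib_mat[of _ N N])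
  have obj: "l1_norm (a + g) + l1_norm (b + h) \<le> l1_norm a + l1_norm b"
    using objle ag bh unfolding objective_def a_def b_def D_def by simp
  have s0: "real (l0_norm a) \<le> s" "real (l0_norm b) \<le> s" using s1 unfolding a_def b_def D_def by auto
  have sp: "s \<ge> 0" using s0(1) by linarith
  have sg0: "sqn g \<ge> 0" "sqn h \<ge> 0" unfolding sqn_def by (auto intro!: sum_nonneg)
  have ca: "(\<Sum>i<N. \<Sum>j<N. if a $$ (i,j) \<noteq> 0 then \<bar>g $$ (i,j)\<bar> else 0) \<le> sqrt s * (2 * F)"
    using supp_cs[OF a g] mult_mono[OF real_sqrt_le_mono[OF s0(1)] sgF] sp sg0 by simp
  have cb: "(\<Sum>i<N. \<Sum>j<N. if b $$ (i,j) \<noteq> 0 then \<bar>h $$ (i,j)\<bar> else 0) \<le> sqrt s * (2 * F)"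
    using supp_cs[OF b h] mult_mono[OF real_sqrt_le_mono[OF s0(2)] shF] sp sg0 by simp
  have l1h: "l1_norm h \<ge> 0" unfolding l1_norm_def by (intro sum_nonneg) auto
  have l1g: "l1_norm g \<le> 8 * sqrt s * F"
    using cone[OF a g] cone[OF b h] obj ca cb l1h by linarith
  have "2 * \<delta> * l1_norm g \<le> 2 * \<delta> * (8 * sqrt s * F)"
    using l1g d0 by (intro mult_left_mono) auto
  then have "F^2 \<le> 16 * sqrt s * \<delta> * F"
    using en by (simp add: mult_ac)
  then have "F \<le> 16 * sqrt s * \<delta>"
    using F0 d0 sp by (cases "F = 0") (auto simp: power2_eq_square)
  then show ?thesis using F by simp
qed


theorem theorem3:
  shows "\<exists>C::real. \<forall>(N::nat) (X::real mat) (A::real set) (\<delta>::real) (q::real mat) (u::real mat)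
            (s::real) (Xh::real mat).
     X \<in> carrier_mat N N \<and> (\<forall>i<N. \<forall>j<N. 0 \<le> X $$ (i,j) \<and> X $$ (i,j) \<le> 1) \<and>
     real (l0_norm (transpose_mat (Dmat N) * X) + l0_norm (X * Dmat N)) \<le> s \<and>
     s < 2 * real N ^ 2 \<and>
     step_alphabet A \<delta> \<and> sigma_delta_2D N A X q u \<and>
     X - q = Dmat N * u * transpose_mat (Dmat N) \<and> max_norm u \<le> \<delta> / 2 \<and>
     feasible N \<delta> q Xh \<and> (\<forall>Z. feasible N \<delta> q Z \<longrightarrow> objective N Xh \<le> objective N Z)
     \<longrightarrow> frob_norm (Xh - X) \<le> C * sqrt s * \<delta>"
proof (rule exI[of _ 16], intro allI impI, elim conjE)
  fix N :: nat and X :: "real mat" and A :: "real set" and \<delta> :: real and q u :: "real mat" and s :: real and Xh :: "real mat"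
  assume "X \<in> carrier_mat N N" "real (l0_norm (transpose_mat (Dmat N) * X) + l0_norm (X * Dmat N)) \<le> s"
    "step_alphabet A \<delta>" "sigma_delta_2D N A X q u" "X - q = Dmat N * u * transpose_mat (Dmat N)"
    "max_norm u \<le> \<delta> / 2" "feasible N \<delta> q Xh" "\<forall>Z. feasible N \<delta> q Z \<longrightarrow> objective N Xh \<le> objective N Z"
  then show "frob_norm (Xh - X) \<le> 16 * sqrt s * \<delta>" by (rule main)
qed

end
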